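(* Let $N$ be a finite nonempty set, $p\notin N$ and $N'=N\cup\{p\}$. Let $\mathscr{C}=\{S_1,\dots,S_k\}$ be a minimal balanced collection on $N$ with (unique) balancing weights $(\lambda_{S_i})_{i\in[k]}$, where $[k]=\{1,\dots,k\}$. Let $I\subseteq[k]$ satisfy $\lambda_I:=\sum_{i\in I}\lambda_{S_i}=1$. Then $$\mathscr{C}'=\{S_i\cup\{p\}\mid i\in I\}\cup\{S_i\mid i\in[k]\setminus I\}$$ is a minimal balanced collection on $N'$.
   Context: For $T\subseteq N$, $\mathbf{1}^T\in\mathbb{R}^N$ denotes the characteristic vector of $T$ ($\mathbf{1}^T_i=1$ if $i\in T$, $0$ otherwise). A collection $\mathscr{B}$ of nonempty subsets of a finite set $N$ is balanced if there exist positive weights $(\lambda_S)_{S\in\mathscr{B}}$ (balancing weights) with $\sum_{S\in\mathscr{B}}\lambda_S\mathbf{1}^S=\mathbf{1}^N$. A balanced collection is minimal if it contains no balanced proper subcollection; equivalently, its system of balancing weights is unique. *)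

theory Defs
  imports "HOL-Analysis.Analysis"
begin

definition charvec :: "'a set \<Rightarrow> 'a \<Rightarrow> real" where
  "charvec T = (\<lambda>i. if i \<in> T then 1 else 0)"

definition balancing_weights :: "'a set \<Rightarrow> 'a set set \<Rightarrow> ('a set \<Rightarrow> real) \<Rightarrow> bool" where
  "balancing_weights N B lam \<longleftrightarrow>
     (\<forall>S\<in>B. lam S > 0) \<and>
     (\<forall>i\<in>N. (\<Sum>S\<in>B. lam S * charvec S i) = charvec N i)"

definition balanced :: "'a set \<Rightarrow> 'a set set \<Rightarrow> bool" where
  "balanced N B \<longleftrightarrow> finite B \<and> (\<forall>S\<in>B. S \<noteq> {} \<and> S \<subseteq> N) \<and>
     (\<exists>lam. balancing_weights N B lam)"

definition minimal_balanced :: "'a set \<Rightarrow> 'a set set \<Rightarrow> bool" where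
  "minimal_balanced N B \<longleftrightarrow> balanced N B \<and> (\<forall>B'. B' \<subset> B \<longrightarrow> \<not> balanced N B')"

end

theory Submission
  imports Defs
begin

theorem lemma4p1:
  fixes N :: "'a set" and p :: 'a and k :: nat and S :: "nat \<Rightarrow> 'a set"
    and lam :: "'a set \<Rightarrow> real" and I :: "nat set"
  assumes "finite N" and "N \<noteq> {}" and "p \<notin> N"
    and "inj_on S {1..k}"
    and "minimal_balanced N (S ` {1..k})"
    and "balancing_weights N (S ` {1..k}) lam"
    and "I \<subseteq> {1..k}"
    and "(\<Sum>i\<in>I. lam (S i)) = 1"
  shows "minimal_balanced (N \<union> {p})
           ((\<lambda>i. S i \<union> {p}) ` I \<union> S ` ({1..k} - I))"
proof -
  define K where "K = {1..k::nat}"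
  define f where "f i = (if i \<in> I then S i \<union> {p} else S i)" for i
  have finK: "finite K" unfolding K_def by simp
  have bal: "balanced N (S ` K)" using assms(5) unfolding minimal_balanced_def K_def by simp
  have SN: "S i \<noteq> {} \<and> S i \<subseteq> N" if "i \<in> K" for i
    using bal that unfolding balanced_def by auto
  have pS: "p \<notin> S i" if "i \<in> K" for i using SN[OF that] assms(3) by auto
  have injS: "inj_on S K" using assms(4) K_def by simp
  have minus: "f i - {p} = S i" if "i \<in> K" for i using pS[OF that] unfolding f_def by auto
  have injf: "inj_on f K"
  proof (rule inj_onI)
    fix i j assume "i \<in> K" "j \<in> K" "f i = f j"
    then have "S i = S j" using minus by metis
    then show "i = j" using injS \<open>i \<in> K\<close> \<open>j \<in> K\<close> by (meson inj_onD)
  qed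
  have ceq: "((\<lambda>i. S i \<union> {p}) ` I \<union> S ` ({1..k} - I)) = f ` K"
    using assms(7) unfolding f_def K_def by auto
  have chf: "charvec (f i) x = charvec (S i) x" if "x \<in> N" for i x
    using that assms(3) unfolding f_def charvec_def by auto
  have lamK: "\<forall>T\<in>S ` K. lam T > 0" "\<forall>x\<in>N. (\<Sum>T\<in>S ` K. lam T * charvec T x) = charvec N x"
    using assms(6) unfolding balancing_weights_def K_def by auto
  have balC: "balanced (N \<union> {p}) (f ` K)"
    unfolding balanced_def
  proof (intro conjI)
    show "finite (f ` K)" using finK by simp
    show "\<forall>T\<in>f ` K. T \<noteq> {} \<and> T \<subseteq> N \<union> {p}" using SN unfolding f_def by auto
    show "\<exists>mu. balancing_weights (N \<union> {p}) (f ` K) mu"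
    proof (intro exI)
      show "balancing_weights (N \<union> {p}) (f ` K) (\<lambda>T. lam (T - {p}))"
        unfolding balancing_weights_def
      proof (intro conjI ballI)
        fix T assume "T \<in> f ` K"
        then obtain i where "i \<in> K" "T = f i" by auto
        then show "lam (T - {p}) > 0" using minus lamK(1) by auto
      next
        fix x assume x: "x \<in> N \<union> {p}"
        have "(\<Sum>T\<in>f ` K. lam (T - {p}) * charvec T x) = (\<Sum>i\<in>K. lam (S i) * charvec (f i) x)"
          by (simp add: sum.reindex[OF injf] minus)
        also have "\<dots> = charvec (N \<union> {p}) x"
        proof (cases "x = p")
          case True
          have "(\<Sum>i\<in>K. lam (S i) * charvec (f i) x) = (\<Sum>i\<in>K. if i \<in> I then lam (S i) else 0)"
            by (rule sum.cong) (auto simp: True charvec_def f_def pS)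
          also have "\<dots> = (\<Sum>i\<in>I. lam (S i))"
          proof -
            have "K \<inter> I = I" using assms(7) K_def by blast
            then show ?thesis using sum.inter_restrict[OF finK, of "\<lambda>i. lam (S i)" I] by simp
          qed
          finally show ?thesis using assms(8) True by (simp add: charvec_def)
        next
          case False
          then have xN: "x \<in> N" using x by auto
          have "(\<Sum>i\<in>K. lam (S i) * charvec (f i) x) = (\<Sum>i\<in>K. lam (S i) * charvec (S i) x)"
            using chf[OF xN] by simp
          also have "\<dots> = (\<Sum>T\<in>S ` K. lam T * charvec T x)"
            by (simp add: sum.reindex[OF injS])
          also have "\<dots> = 1" using lamK(2) xN by (simp add: charvec_def)
          finally show ?thesis using xN by (simp add: charvec_def)
        qed
        finally show "(\<Sum>T\<in>f ` K. lam (T - {p}) * charvec T x) = charvec (N \<union> {p}) x" .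
      qed
    qed
  qed
  have minC: "\<not> balanced (N \<union> {p}) B'" if sB: "B' \<subset> f ` K" for B'
  proof
    assume bB: "balanced (N \<union> {p}) B'"
    then obtain nu where nu: "balancing_weights (N \<union> {p}) B' nu" unfolding balanced_def by auto
    define J where "J = {i\<in>K. f i \<in> B'}"
    have BJ: "B' = f ` J"
    proof
      show "B' \<subseteq> f ` J"
      proof
        fix T assume "T \<in> B'"
        then have "T \<in> f ` K" using sB by blast
        then obtain i where "i \<in> K" "T = f i" by blast
        then show "T \<in> f ` J" using \<open>T \<in> B'\<close> unfolding J_def by blast
      qed
      show "f ` J \<subseteq> B'" unfolding J_def by blast
    qed
    have JK: "J \<subseteq> K" unfolding J_def by auto
    have "\<not> K \<subseteq> J"
    proof
      assume "K \<subseteq> J"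
      then have "f ` K \<subseteq> B'" using BJ by auto
      then show False using sB subset_antisym unfolding psubset_eq by metis
    qed
    then obtain i0 where i0: "i0 \<in> K" "i0 \<notin> J" by auto
    have sub: "S ` J \<subset> S ` K"
    proof
      show "S ` J \<subseteq> S ` K" using JK by auto
      show "S ` J \<noteq> S ` K"
      proof
        assume "S ` J = S ` K"
        then have "S i0 \<in> S ` J" using i0 by auto
        then obtain j where "j \<in> J" "S j = S i0" by auto
        then have "j = i0" using injS JK i0(1) by (meson inj_onD subsetD)
        then show False using i0 \<open>j \<in> J\<close> by simp
      qed
    qed
    have injSJ: "inj_on S J" using injS JK inj_on_subset by blast
    have injfJ: "inj_on f J" using injf JK inj_on_subset by blast
    have "balanced N (S ` J)"
      unfolding balanced_def
    proof (intro conjI)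
      show "finite (S ` J)" using finK JK by (meson finite_imageI finite_subset)
      show "\<forall>T\<in>S ` J. T \<noteq> {} \<and> T \<subseteq> N" using SN JK by auto
      show "\<exists>mu. balancing_weights N (S ` J) mu"
      proof (intro exI)
        show "balancing_weights N (S ` J) (\<lambda>T. nu (f (inv_into J S T)))"
          unfolding balancing_weights_def
        proof (intro conjI ballI)
          fix T assume "T \<in> S ` J"
          then obtain i where i: "i \<in> J" "T = S i" by auto
          then have "inv_into J S T = i" using injSJ by simp
          have "f i \<in> B'" using i(1) unfolding J_def by blast
          then show "nu (f (inv_into J S T)) > 0" using nu \<open>inv_into J S T = i\<close> unfolding balancing_weights_def by simp
        next
          fix x assume xN: "x \<in> N"
          have "(\<Sum>T\<in>S ` J. nu (f (inv_into J S T)) * charvec T x) = (\<Sum>i\<in>J. nu (f i) * charvec (S i) x)"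
          proof -
            have "(\<Sum>T\<in>S ` J. nu (f (inv_into J S T)) * charvec T x) = (\<Sum>i\<in>J. nu (f (inv_into J S (S i))) * charvec (S i) x)"
              using sum.reindex[OF injSJ, of "\<lambda>T. nu (f (inv_into J S T)) * charvec T x"] by (simp only: comp_def)
            also have "\<dots> = (\<Sum>i\<in>J. nu (f i) * charvec (S i) x)"
              by (rule sum.cong) (simp_all only: inv_into_f_f[OF injSJ])
            finally show ?thesis .
          qed
          also have "\<dots> = (\<Sum>i\<in>J. nu (f i) * charvec (f i) x)" using chf[OF xN] by simp
          also have "\<dots> = (\<Sum>T\<in>B'. nu T * charvec T x)"
            unfolding BJ using sum.reindex[OF injfJ, of "\<lambda>T. nu T * charvec T x"] by (simp only: comp_def)
          also have "\<dots> = charvec (N \<union> {p}) x" using nu xN unfolding balancing_weights_def by blast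
          also have "\<dots> = charvec N x" using xN by (simp add: charvec_def)
          finally show "(\<Sum>T\<in>S ` J. nu (f (inv_into J S T)) * charvec T x) = charvec N x" .
        qed
      qed
    qed
    moreover have "\<forall>B'. B' \<subset> S ` K \<longrightarrow> \<not> balanced N B'" using assms(5) unfolding minimal_balanced_def K_def by simp
    ultimately show False using sub by blast
  qed
  show ?thesis unfolding ceq minimal_balanced_def using balC minC by blast
qed

end
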